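(* Let $d\in\mathbb{N}$, let $\mathcal{L}:\mathbb{R}^d\to\mathbb{R}$ be differentiable and $L$-smooth (i.e. $\nabla\mathcal{L}$ is $L$-Lipschitz with respect to the Euclidean norm, for some $L\ge 0$), and let $\tau>0$. Let $(\lambda^{(k)})_{k\ge 0}$ be any sequence of parameters with $\lambda^{(k)}\ge 0$. Starting from arbitrary $p^{(0)},\theta^{(0)}\in\mathbb{R}^d$, define for $k\ge 0$ $$p^{(k+1)} = p^{(k)} - \tau\,\nabla\mathcal{L}(\theta^{(k)}),\qquad \theta^{(k+1)} = \nabla \operatorname{EN}_{\lambda^{(k)}}^*\big(p^{(k+1)}\big),$$ where $\operatorname{EN}_\lambda(\theta)=\tfrac12|\theta|_2^2+\lambda|\theta|_1$ and $\nabla\operatorname{EN}_\lambda^*(p) = \big(\operatorname{sign}(p_i)\max\{|p_i|-\lambda,0\}\big)_{i=1}^d$ is the gradient of its convex conjugate (componentwise soft-thresholding). Then for every $k\ge 1$, $$\mathcal{L}(\theta^{(k+1)}) + \Big(\frac{1}{\tau}-\frac{L}{2}\Big)\,|\theta^{(k+1)}-\theta^{(k)}|_2^2 + \frac{\lambda^{(k)}-\lambda^{(k-1)}}{\tau}\big(|\theta^{(k+1)}|_1 - |\theta^{(k)}|_1\big) \le \mathcal{L}(\theta^{(k)}).$$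
   Context: $|\cdot|_1$ and $|\cdot|_2$ denote the $\ell_1$ and Euclidean norms on $\mathbb{R}^d$. The iteration is a linearized Bregman / lazy mirror descent scheme with an elastic-net mirror functional whose $\ell_1$-weight $\lambda^{(k)}$ may change from iteration to iteration. *)

theory Defs
  imports "HOL-Analysis.Analysis"
begin

definition l1norm :: "real^'n \<Rightarrow> real" where
  "l1norm x = (\<Sum>i\<in>UNIV. \<bar>x $ i\<bar>)"

text \<open>Gradient of the convex conjugate of the elastic net EN_lam(theta) = 1/2 |theta|_2^2 + lam |theta|_1:
  componentwise soft-thresholding.\<close>
definition grad_EN_conj :: "real \<Rightarrow> real^'n \<Rightarrow> real^'n" where
  "grad_EN_conj lam p = (\<chi> i. sgn (p $ i) * max (\<bar>p $ i\<bar> - lam) 0)"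

end

theory Submission imports Defs begin
lemma soft_sub:
  fixes l a :: real assumes "l \<ge> 0"
  shows "\<exists>s. \<bar>s\<bar> \<le> 1 \<and> s * (sgn a * max (\<bar>a\<bar> - l) 0) = \<bar>sgn a * max (\<bar>a\<bar> - l) 0\<bar>
            \<and> a = sgn a * max (\<bar>a\<bar> - l) 0 + l * s"
proof (cases "\<bar>a\<bar> > l")
  case True
  then show ?thesis
    by (intro exI[of _ "sgn a"]) (auto simp: sgn_if abs_mult algebra_simps)
next
  case False
  show ?thesis
  proof (cases "l = 0")
    case True with False show ?thesis by (intro exI[of _ 0]) auto
  next
    case l: False
    with assms have "l > 0" by auto
    with False show ?thesis
      by (intro exI[of _ "a / l"]) (auto simp: field_simps)
  qed
qed

lemma scalar_key:
  fixes l l' a b :: real assumes "l \<ge> 0" "l' \<ge> 0"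
  defines "x \<equiv> sgn a * max (\<bar>a\<bar> - l') 0" and "y \<equiv> sgn b * max (\<bar>b\<bar> - l) 0"
  shows "(a - b) * (y - x) \<le> - (y - x)\<^sup>2 - (l - l') * (\<bar>y\<bar> - \<bar>x\<bar>)"
proof -
  obtain s where s: "\<bar>s\<bar> \<le> 1" "s * x = \<bar>x\<bar>" "a = x + l' * s"
    using soft_sub[OF assms(2), of a] unfolding x_def by blast
  obtain t where t: "\<bar>t\<bar> \<le> 1" "t * y = \<bar>y\<bar>" "b = y + l * t"
    using soft_sub[OF assms(1), of b] unfolding y_def by blast
  have "s * y \<le> \<bar>s * y\<bar>" by (rule abs_ge_self)
  also have "\<dots> = \<bar>s\<bar> * \<bar>y\<bar>" by (rule abs_mult)
  also have "\<dots> \<le> \<bar>y\<bar>" using s(1) by (simp add: mult_left_le_one_le)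
  finally have "s * y \<le> \<bar>y\<bar>" .
  hence 1: "l' * (s * y) \<le> l' * \<bar>y\<bar>" using assms(2) by (simp add: mult_left_mono)
  have "t * x \<le> \<bar>t * x\<bar>" by (rule abs_ge_self)
  also have "\<dots> = \<bar>t\<bar> * \<bar>x\<bar>" by (rule abs_mult)
  also have "\<dots> \<le> \<bar>x\<bar>" using t(1) by (simp add: mult_left_le_one_le)
  finally have "t * x \<le> \<bar>x\<bar>" .
  hence 2: "l * (t * x) \<le> l * \<bar>x\<bar>" using assms(1) by (simp add: mult_left_mono)
  have "(a - b) * (y - x) = - (y - x)\<^sup>2 + l' * (s * y) - l' * (s * x) - l * (t * y) + l * (t * x)"
    by (simp add: s(3) t(3) algebra_simps power2_eq_square)
  also have "\<dots> \<le> - (y - x)\<^sup>2 - (l - l') * (\<bar>y\<bar> - \<bar>x\<bar>)"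
    using 1 2 s(2) t(2) by (simp add: algebra_simps)
  finally show ?thesis .
qed

lemma descent:
  fixes f :: "'a::real_inner \<Rightarrow> real"
  assumes g: "\<And>x. GDERIV f x :> g x" and lip: "\<And>x y. norm (g x - g y) \<le> Lc * norm (x - y)"
  shows "f y \<le> f x + inner (g x) (y - x) + Lc / 2 * (norm (y - x))^2"
proof -
  define d where "d = y - x"
  define \<psi> where "\<psi> t = f (x + t *\<^sub>R d) - t * inner (g x) d - Lc / 2 * t^2 * (norm d)^2" for t
  have der: "(\<psi> has_real_derivative (inner (g (x + t *\<^sub>R d)) d - inner (g x) d - Lc * t * (norm d)^2)) (at t)" for t
  proof -
    have h1: "((\<lambda>t. x + t *\<^sub>R d) has_derivative (\<lambda>h. h *\<^sub>R d)) (at t)"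
      by (auto intro!: derivative_eq_intros)
    have h2: "(f has_derivative (\<lambda>h. inner (g (x + t *\<^sub>R d)) h)) (at (x + t *\<^sub>R d))"
      using g[of "x + t *\<^sub>R d"] unfolding gderiv_def by (simp add: inner_commute)
    have "((\<lambda>t. f (x + t *\<^sub>R d)) has_derivative (\<lambda>h. inner (g (x + t *\<^sub>R d)) (h *\<^sub>R d))) (at t)"
      using has_derivative_compose[OF h1 h2] by (simp add: o_def)
    hence "((\<lambda>t. f (x + t *\<^sub>R d)) has_real_derivative inner (g (x + t *\<^sub>R d)) d) (at t)"
      unfolding has_field_derivative_def by (simp add: mult.commute[of _ "inner (g (x + t *\<^sub>R d)) d"])
    then show ?thesis unfolding \<psi>_def
      by (auto intro!: derivative_eq_intros simp: power2_eq_square algebra_simps)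
  qed
  have nonpos: "inner (g (x + t *\<^sub>R d)) d - inner (g x) d - Lc * t * (norm d)^2 \<le> 0" if "0 \<le> t" for t
  proof -
    have "inner (g (x + t *\<^sub>R d)) d - inner (g x) d = inner (g (x + t *\<^sub>R d) - g x) d"
      by (simp add: inner_diff_left)
    also have "\<dots> \<le> norm (g (x + t *\<^sub>R d) - g x) * norm d" by (rule norm_cauchy_schwarz)
    also have "\<dots> \<le> Lc * norm (t *\<^sub>R d) * norm d"
      using lip[of "x + t *\<^sub>R d" x] by (simp add: mult_right_mono)
    also have "\<dots> = Lc * t * (norm d)^2" using that by (simp add: power2_eq_square)
    finally show ?thesis by simp
  qed
  have "\<psi> 1 \<le> \<psi> 0"
  proof (rule DERIV_nonpos_imp_nonincreasing[of 0 1])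
    fix t :: real assume "0 \<le> t" "t \<le> 1"
    then show "\<exists>y. (\<psi> has_real_derivative y) (at t) \<and> y \<le> 0"
      using der[of t] nonpos[of t] by blast
  qed simp
  thus ?thesis unfolding \<psi>_def d_def by (simp add: algebra_simps)
qed

lemma vec_key:
  fixes a b :: "real^'n" and l l' :: real
  assumes "l \<ge> 0" "l' \<ge> 0"
  shows "inner (a - b) (grad_EN_conj l b - grad_EN_conj l' a)
     \<le> - (norm (grad_EN_conj l b - grad_EN_conj l' a))\<^sup>2
        - (l - l') * (l1norm (grad_EN_conj l b) - l1norm (grad_EN_conj l' a))"
proof -
  let ?x = "grad_EN_conj l' a" and ?y = "grad_EN_conj l b"
  have "inner (a - b) (?y - ?x) = (\<Sum>i\<in>UNIV. (a$i - b$i) * (?y$i - ?x$i))"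
    by (simp add: inner_vec_def)
  also have "\<dots> \<le> (\<Sum>i\<in>UNIV. - (?y$i - ?x$i)\<^sup>2 - (l - l') * (\<bar>?y$i\<bar> - \<bar>?x$i\<bar>))"
    by (rule sum_mono) (simp add: grad_EN_conj_def scalar_key[OF assms])
  also have "\<dots> = - (\<Sum>i\<in>UNIV. (?y$i - ?x$i)\<^sup>2) - (l - l') * ((\<Sum>i\<in>UNIV. \<bar>?y$i\<bar>) - (\<Sum>i\<in>UNIV. \<bar>?x$i\<bar>))"
    by (simp add: sum_subtractf sum_distrib_left sum_negf right_diff_distrib)
  also have "(\<Sum>i\<in>UNIV. (?y$i - ?x$i)\<^sup>2) = (norm (?y - ?x))\<^sup>2"
    unfolding power2_norm_eq_inner by (simp add: inner_vec_def power2_eq_square)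
  finally show ?thesis by (simp add: l1norm_def)
qed

theorem lemma1:
  fixes Loss :: "real^'n \<Rightarrow> real" and gradL :: "real^'n \<Rightarrow> real^'n"
    and Lc \<tau> :: real and lam :: "nat \<Rightarrow> real"
    and p \<theta> :: "nat \<Rightarrow> real^'n" and k :: nat
  assumes grad: "\<And>x. GDERIV Loss x :> gradL x"
    and Lc_nonneg: "Lc \<ge> 0"
    and smooth: "\<And>x y. norm (gradL x - gradL y) \<le> Lc * norm (x - y)"
    and tau_pos: "\<tau> > 0"
    and lam_nonneg: "\<And>j. lam j \<ge> 0"
    and p_step: "\<And>j. p (Suc j) = p j - \<tau> *\<^sub>R gradL (\<theta> j)"
    and theta_step: "\<And>j. \<theta> (Suc j) = grad_EN_conj (lam j) (p (Suc j))"
    and k_ge: "k \<ge> 1"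
  shows "Loss (\<theta> (Suc k)) + (1 / \<tau> - Lc / 2) * (norm (\<theta> (Suc k) - \<theta> k))\<^sup>2
           + (lam k - lam (k - 1)) / \<tau> * (l1norm (\<theta> (Suc k)) - l1norm (\<theta> k))
         \<le> Loss (\<theta> k)"
proof -
  obtain m where km: "k = Suc m" using k_ge by (cases k) auto
  have thk: "\<theta> k = grad_EN_conj (lam (k - 1)) (p k)" using theta_step[of m] km by simp
  define D where "D = (norm (\<theta> (Suc k) - \<theta> k))\<^sup>2"
  define E where "E = (lam k - lam (k - 1)) * (l1norm (\<theta> (Suc k)) - l1norm (\<theta> k))"
  have key: "inner (p k - p (Suc k)) (\<theta> (Suc k) - \<theta> k) \<le> - D - E"
    unfolding D_def E_def thk theta_step[of k]
    by (rule vec_key[OF lam_nonneg lam_nonneg])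
  have g: "gradL (\<theta> k) = (1 / \<tau>) *\<^sub>R (p k - p (Suc k))"
    using p_step[of k] tau_pos by simp
  have desc: "Loss (\<theta> (Suc k)) \<le> Loss (\<theta> k) + inner (gradL (\<theta> k)) (\<theta> (Suc k) - \<theta> k) + Lc / 2 * D"
    unfolding D_def by (rule descent[OF grad smooth])
  have "inner (gradL (\<theta> k)) (\<theta> (Suc k) - \<theta> k) = (1 / \<tau>) * inner (p k - p (Suc k)) (\<theta> (Suc k) - \<theta> k)"
    by (simp add: g)
  also have "\<dots> \<le> (1 / \<tau>) * (- D - E)"
    using key tau_pos by (simp add: divide_right_mono)
  finally have "inner (gradL (\<theta> k)) (\<theta> (Suc k) - \<theta> k) \<le> (1 / \<tau>) * (- D - E)" .
  with desc have "Loss (\<theta> (Suc k)) \<le> Loss (\<theta> k) + (1 / \<tau>) * (- D - E) + Lc / 2 * D" by linarith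
  then show ?thesis unfolding D_def[symmetric] E_def[symmetric]
    by (simp add: algebra_simps diff_divide_distrib E_def)
qed

end
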